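(* Let $n,m\ge1$ and consider the $n\times m$ grid communication graph with a direction assignment $g$ such that adjacent circles have opposite directions. Then there are exactly $\gcd(n,m)$ rings, all of them have the same length, and all of them have the same number of hitting points on each of the four walls (i.e., for each wall, every ring hits that wall the same number of times).
   Context: Grid. The $n\times m$ grid communication graph consists of $nm$ pairwise disjoint unit circles, circle $(i,j)$ in row $i$ (rows horizontal, row 1 on top) and column $j$ (columns vertical, column 1 on the left), centres on a square lattice, circle $(i,j)$ adjacent exactly to the existing circles $(i\pm1,j)$, $(i,j\pm1)$. For adjacent circles $C_i,C_j$, the link position $\phi_{ij}$ is the point of $C_i$ closest to $C_j$. A direction assignment gives each circle $C$ a direction $g(C)\in\{1,-1\}$ (counterclockwise/clockwise), with $g(C_i)=-g(C_j)$ for adjacent circles. Rings. Trace a point moving along a circle $C_i$ in direction $g(C_i)$ at constant speed; whenever it reaches a link position $\phi_{ij}$ of its current circle, it passes to $C_j$ at $\phi_{ji}$ and continues along $C_j$ in direction $g(C_j)$ (this is the motion of a robot that never meets any other robot). This motion is periodic and the closed curve it traces is a ring. Every arc of a circle between consecutive link positions belongs to exactly one ring, so the circles decompose into rings overlapping only at link positions. The length of a ring is the total length of the circle arcs forming it. Walls. A ring hits the top wall (at a circle of row 1) each time it passes through the topmost point of a circle of row 1; similarly for the bottom wall (bottommost points of circles of row $n$), the left wall (leftmost points of circles of column 1) and the right wall (rightmost points of circles of column $m$). The number of hitting points of a ring on a wall is the number of such points on the ring. *)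

theory Defs
  imports Complex_Main
begin

text \<open>Circle (i,j): row i (1 = top), column j (1 = left).
  Compass points of a circle: 0 = rightmost, 1 = topmost, 2 = leftmost, 3 = bottommost,
  i.e. angles 0, pi/2, pi, 3pi/2 (counterclockwise = increasing index).
  Since the centres lie on a square lattice, the link position towards a neighbour is
  exactly the compass point pointing to it.  Every circle is cut by its compass points into
  four quarter arcs (each of length pi/2); the arc (c,p) is the quarter arc of c starting
  at compass point p and traversed in direction g c.\<close>

type_synonym circle = "nat \<times> nat"

definition circles :: "nat \<Rightarrow> nat \<Rightarrow> circle set" where
  "circles n m = {1..n} \<times> {1..m}"

definition adjacent :: "nat \<Rightarrow> nat \<Rightarrow> circle \<Rightarrow> circle \<Rightarrow> bool" where
  "adjacent n m c d \<longleftrightarrow> c \<in> circles n m \<and> d \<in> circles n m \<and>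
     \<bar>int (fst c) - int (fst d)\<bar> + \<bar>int (snd c) - int (snd d)\<bar> = 1"

definition direction_assignment :: "nat \<Rightarrow> nat \<Rightarrow> (circle \<Rightarrow> int) \<Rightarrow> bool" where
  "direction_assignment n m g \<longleftrightarrow>
     (\<forall>c\<in>circles n m. g c = 1 \<or> g c = -1) \<and>
     (\<forall>c d. adjacent n m c d \<longrightarrow> g c = - g d)"

text \<open>The position in the lattice in the direction of compass point p
  (not necessarily an existing circle; 0 coordinates are never circles).\<close>
definition nbr :: "circle \<Rightarrow> nat \<Rightarrow> circle" where
  "nbr c p = (if p = 0 then (fst c, snd c + 1)
              else if p = 1 then (fst c - 1, snd c)
              else if p = 2 then (fst c, snd c - 1)
              else (fst c + 1, snd c))"

text \<open>Compass point reached after moving a quarter turn in direction d.\<close>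
definition rot :: "int \<Rightarrow> nat \<Rightarrow> nat" where
  "rot d p = nat ((int p + d) mod 4)"

definition arcs :: "nat \<Rightarrow> nat \<Rightarrow> (circle \<times> nat) set" where
  "arcs n m = circles n m \<times> {0..<4}"

text \<open>Motion of a robot: after traversing the quarter arc (c,p) it arrives at compass
  point q of c; if q is a link position (a neighbour exists there) it passes to that
  neighbour at the opposite compass point, otherwise it stays on c.\<close>
definition step :: "nat \<Rightarrow> nat \<Rightarrow> (circle \<Rightarrow> int) \<Rightarrow> circle \<times> nat \<Rightarrow> circle \<times> nat" where
  "step n m g a = (let c = fst a; q = rot (g c) (snd a) in
      if nbr c q \<in> circles n m then (nbr c q, (q + 2) mod 4) else (c, q))"

definition ring_of :: "nat \<Rightarrow> nat \<Rightarrow> (circle \<Rightarrow> int) \<Rightarrow> circle \<times> nat \<Rightarrow> (circle \<times> nat) set" where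
  "ring_of n m g a = {(step n m g ^^ k) a | k. True}"

definition rings :: "nat \<Rightarrow> nat \<Rightarrow> (circle \<Rightarrow> int) \<Rightarrow> (circle \<times> nat) set set" where
  "rings n m g = ring_of n m g ` arcs n m"

definition ring_length :: "(circle \<times> nat) set \<Rightarrow> real" where
  "ring_length R = (pi / 2) * real (card R)"

text \<open>Compass point q of circle c lies on ring R.\<close>
definition on_ring :: "(circle \<Rightarrow> int) \<Rightarrow> (circle \<times> nat) set \<Rightarrow> circle \<Rightarrow> nat \<Rightarrow> bool" where
  "on_ring g R c q \<longleftrightarrow> (\<exists>p. (c, p) \<in> R \<and> (p = q \<or> rot (g c) p = q))"

datatype wall = Top | Bottom | Left | Right

definition hits :: "nat \<Rightarrow> nat \<Rightarrow> (circle \<Rightarrow> int) \<Rightarrow> wall \<Rightarrow> (circle \<times> nat) set \<Rightarrow> nat" where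
  "hits n m g w R = (case w of
      Top \<Rightarrow> card {j \<in> {1..m}. on_ring g R (1, j) 1}
    | Bottom \<Rightarrow> card {j \<in> {1..m}. on_ring g R (n, j) 3}
    | Left \<Rightarrow> card {i \<in> {1..n}. on_ring g R (i, 1) 2}
    | Right \<Rightarrow> card {i \<in> {1..n}. on_ring g R (i, m) 0})"

end

theory Submission
  imports Defs
begin

definition ox :: "nat \<Rightarrow> int" where "ox p = (if p=0 then 1 else if p = 2 then -1 else 0)"
definition oy :: "nat \<Rightarrow> int" where "oy p = (if p=1 then -1 else if p=3 then 1 else 0)"
definition rq :: "(circle \<Rightarrow> int) \<Rightarrow> circle \<times> nat \<Rightarrow> nat" where
  "rq g a = rot (g (fst a)) (snd a)"
definition pX :: "circle \<times> nat \<Rightarrow> int" where "pX a = 2 * int (snd (fst a)) - 1 + ox (snd a)"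
definition pY :: "circle \<times> nat \<Rightarrow> int" where "pY a = 2 * int (fst (fst a)) - 1 + oy (snd a)"
definition dX where "dX g a = ox (rq g a) - ox (snd a)"
definition dY where "dY g a = oy (rq g a) - oy (snd a)"
definition phiu :: "nat \<Rightarrow> (circle \<Rightarrow> int) \<Rightarrow> circle \<times> nat \<Rightarrow> int" where
  "phiu m g a = (if dX g a = 1 then pX a else 4 * int m - pX a) mod (4 * int m)"
definition phiv :: "nat \<Rightarrow> (circle \<Rightarrow> int) \<Rightarrow> circle \<times> nat \<Rightarrow> int" where
  "phiv n g a = (if dY g a = 1 then pY a else 4 * int n - pY a) mod (4 * int n)"

lemma arcsE:
  assumes "a \<in> arcs n m"
  obtains i j p where "a = ((i,j),p)" "1 \<le> i" "i \<le> n" "1 \<le> j" "j \<le> m" "p < 4"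
  using assms unfolding arcs_def circles_def by auto

lemma g_nbr:
  assumes da: "direction_assignment n m g" and c: "c \<in> circles n m"
    and nb: "nbr c q \<in> circles n m" and q: "q < 4"
  shows "g (nbr c q) = - g c"
proof -
  have "adjacent n m (nbr c q) c"
    using c nb q unfolding adjacent_def nbr_def circles_def
    by (cases c) (auto simp: less_Suc_eq numeral_eq_Suc)
  then show ?thesis using da unfolding direction_assignment_def by (metis prod.collapse)
qed

lemma g_pm: "direction_assignment n m g \<Longrightarrow> c \<in> circles n m \<Longrightarrow> g c = 1 \<or> g c = -1"
  unfolding direction_assignment_def by auto

lemma p4: "(p::nat) < 4 \<Longrightarrow> p = 0 \<or> p = 1 \<or> p = 2 \<or> p = 3" by auto

lemma rot_vals: "rot 1 0 = 1" "rot 1 1 = 2" "rot 1 2 = 3" "rot 1 3 = 0"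
  "rot (-1) 0 = 3" "rot (-1) 1 = 0" "rot (-1) 2 = 1" "rot (-1) 3 = 2"
  by (simp_all add: rot_def)

lemma rot_vals2: "rot 1 (Suc 0) = 2" "rot (-1) (Suc 0) = 0" "rot 1 (Suc (Suc 0)) = 3" "rot (-1) (Suc (Suc 0)) = 1"
  "rot 1 (Suc (Suc (Suc 0))) = 0" "rot (-1) (Suc (Suc (Suc 0))) = 2"
  by (simp_all add: rot_def)

definition uR :: "nat \<Rightarrow> (circle \<Rightarrow> int) \<Rightarrow> circle \<times> nat \<Rightarrow> int" where
  "uR m g a = (if dX g a = 1 then pX a else 4 * int m - pX a)"
definition vR :: "nat \<Rightarrow> (circle \<Rightarrow> int) \<Rightarrow> circle \<times> nat \<Rightarrow> int" where
  "vR n g a = (if dY g a = 1 then pY a else 4 * int n - pY a)"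

definition decp :: "int \<Rightarrow> int \<Rightarrow> int \<Rightarrow> int \<Rightarrow> nat" where
  "decp x y dx dy = (if odd x then (if dy = 1 then 1 else 3) else (if dx = 1 then 2 else 0))"
definition dec :: "int \<Rightarrow> int \<Rightarrow> int \<Rightarrow> int \<Rightarrow> circle \<times> nat" where
  "dec x y dx dy = ((nat ((y + 1 - oy (decp x y dx dy)) div 2), nat ((x + 1 - ox (decp x y dx dy)) div 2)), decp x y dx dy)"

lemma step_uR:
  assumes da: "direction_assignment n m g" and a: "a \<in> arcs n m"
  shows "uR m g (step n m g a) = uR m g a + 1 \<or> uR m g (step n m g a) = uR m g a + 1 - 4 * int m"
proof -
  obtain i j p where A: "a = ((i,j),p)" "1 \<le> i" "i \<le> n" "1 \<le> j" "j \<le> m" "p < 4"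
    using a by (rule arcsE)
  have c: "(i,j) \<in> circles n m" using A unfolding circles_def by auto
  have G: "g (i,j) = 1 \<or> g (i,j) = -1" using g_pm[OF da c] .
  let ?q = "rot (g (i,j)) p"
  have q4: "?q < 4" unfolding rot_def by (simp add: nat_less_iff)
  show ?thesis
  proof (cases "nbr (i,j) ?q \<in> circles n m")
    case True
    have gn: "g (nbr (i,j) ?q) = - g (i,j)" by (rule g_nbr[OF da c True q4])
    from p4[OF A(6)] G show ?thesis
    proof (elim disjE)
      assume "p = 0" "g (i,j) = 1"
      then show ?thesis using True gn A
        by (simp add: step_def uR_def dX_def pX_def rq_def Let_def rot_vals rot_vals2 nbr_def ox_def)
    next
      assume "p = 1" "g (i,j) = 1"
      then show ?thesis using True gn A
        by (simp add: step_def uR_def dX_def pX_def rq_def Let_def rot_vals rot_vals2 nbr_def ox_def)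
    next
      assume "p = 2" "g (i,j) = 1"
      then show ?thesis using True gn A
        by (simp add: step_def uR_def dX_def pX_def rq_def Let_def rot_vals rot_vals2 nbr_def ox_def)
    next
      assume "p = 3" "g (i,j) = 1"
      then show ?thesis using True gn A
        by (simp add: step_def uR_def dX_def pX_def rq_def Let_def rot_vals rot_vals2 nbr_def ox_def)
    next
      assume "p = 0" "g (i,j) = - 1"
      then show ?thesis using True gn A
        by (simp add: step_def uR_def dX_def pX_def rq_def Let_def rot_vals rot_vals2 nbr_def ox_def)
    next
      assume "p = 1" "g (i,j) = - 1"
      then show ?thesis using True gn A
        by (simp add: step_def uR_def dX_def pX_def rq_def Let_def rot_vals rot_vals2 nbr_def ox_def)
    next
      assume "p = 2" "g (i,j) = - 1"
      then show ?thesis using True gn A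
        by (simp add: step_def uR_def dX_def pX_def rq_def Let_def rot_vals rot_vals2 nbr_def ox_def)
    next
      assume "p = 3" "g (i,j) = - 1"
      then show ?thesis using True gn A
        by (simp add: step_def uR_def dX_def pX_def rq_def Let_def rot_vals rot_vals2 nbr_def ox_def)
    qed
  next
    case False
    from p4[OF A(6)] G show ?thesis
    proof (elim disjE)
      assume "p = 0" "g (i,j) = 1"
      then show ?thesis using False A
        by (auto simp add: step_def uR_def dX_def pX_def rq_def Let_def rot_vals rot_vals2 nbr_def ox_def circles_def)
    next
      assume "p = 1" "g (i,j) = 1"
      then show ?thesis using False A
        by (auto simp add: step_def uR_def dX_def pX_def rq_def Let_def rot_vals rot_vals2 nbr_def ox_def circles_def)
    next
      assume "p = 2" "g (i,j) = 1"
      then show ?thesis using False A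
        by (auto simp add: step_def uR_def dX_def pX_def rq_def Let_def rot_vals rot_vals2 nbr_def ox_def circles_def)
    next
      assume "p = 3" "g (i,j) = 1"
      then show ?thesis using False A
        by (auto simp add: step_def uR_def dX_def pX_def rq_def Let_def rot_vals rot_vals2 nbr_def ox_def circles_def)
    next
      assume "p = 0" "g (i,j) = - 1"
      then show ?thesis using False A
        by (auto simp add: step_def uR_def dX_def pX_def rq_def Let_def rot_vals rot_vals2 nbr_def ox_def circles_def)
    next
      assume "p = 1" "g (i,j) = - 1"
      then show ?thesis using False A
        by (auto simp add: step_def uR_def dX_def pX_def rq_def Let_def rot_vals rot_vals2 nbr_def ox_def circles_def)
    next
      assume "p = 2" "g (i,j) = - 1"
      then show ?thesis using False A
        by (auto simp add: step_def uR_def dX_def pX_def rq_def Let_def rot_vals rot_vals2 nbr_def ox_def circles_def)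
    next
      assume "p = 3" "g (i,j) = - 1"
      then show ?thesis using False A
        by (auto simp add: step_def uR_def dX_def pX_def rq_def Let_def rot_vals rot_vals2 nbr_def ox_def circles_def)
    qed
  qed
qed

lemma step_vR:
  assumes da: "direction_assignment n m g" and a: "a \<in> arcs n m"
  shows "vR n g (step n m g a) = vR n g a + 1 \<or> vR n g (step n m g a) = vR n g a + 1 - 4 * int n"
proof -
  obtain i j p where A: "a = ((i,j),p)" "1 \<le> i" "i \<le> n" "1 \<le> j" "j \<le> m" "p < 4"
    using a by (rule arcsE)
  have c: "(i,j) \<in> circles n m" using A unfolding circles_def by auto
  have G: "g (i,j) = 1 \<or> g (i,j) = -1" using g_pm[OF da c] .
  let ?q = "rot (g (i,j)) p"
  have q4: "?q < 4" unfolding rot_def by (simp add: nat_less_iff)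
  show ?thesis
  proof (cases "nbr (i,j) ?q \<in> circles n m")
    case True
    have gn: "g (nbr (i,j) ?q) = - g (i,j)" by (rule g_nbr[OF da c True q4])
    from p4[OF A(6)] G show ?thesis
    proof (elim disjE)
      assume "p = 0" "g (i,j) = 1"
      then show ?thesis using True gn A
        by (simp add: step_def vR_def dY_def pY_def rq_def Let_def rot_vals rot_vals2 nbr_def oy_def)
    next
      assume "p = 1" "g (i,j) = 1"
      then show ?thesis using True gn A
        by (simp add: step_def vR_def dY_def pY_def rq_def Let_def rot_vals rot_vals2 nbr_def oy_def)
    next
      assume "p = 2" "g (i,j) = 1"
      then show ?thesis using True gn A
        by (simp add: step_def vR_def dY_def pY_def rq_def Let_def rot_vals rot_vals2 nbr_def oy_def)
    next
      assume "p = 3" "g (i,j) = 1"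
      then show ?thesis using True gn A
        by (simp add: step_def vR_def dY_def pY_def rq_def Let_def rot_vals rot_vals2 nbr_def oy_def)
    next
      assume "p = 0" "g (i,j) = - 1"
      then show ?thesis using True gn A
        by (simp add: step_def vR_def dY_def pY_def rq_def Let_def rot_vals rot_vals2 nbr_def oy_def)
    next
      assume "p = 1" "g (i,j) = - 1"
      then show ?thesis using True gn A
        by (simp add: step_def vR_def dY_def pY_def rq_def Let_def rot_vals rot_vals2 nbr_def oy_def)
    next
      assume "p = 2" "g (i,j) = - 1"
      then show ?thesis using True gn A
        by (simp add: step_def vR_def dY_def pY_def rq_def Let_def rot_vals rot_vals2 nbr_def oy_def)
    next
      assume "p = 3" "g (i,j) = - 1"
      then show ?thesis using True gn A
        by (simp add: step_def vR_def dY_def pY_def rq_def Let_def rot_vals rot_vals2 nbr_def oy_def)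
    qed
  next
    case False
    from p4[OF A(6)] G show ?thesis
    proof (elim disjE)
      assume "p = 0" "g (i,j) = 1"
      then show ?thesis using False A
        by (auto simp add: step_def vR_def dY_def pY_def rq_def Let_def rot_vals rot_vals2 nbr_def oy_def circles_def)
    next
      assume "p = 1" "g (i,j) = 1"
      then show ?thesis using False A
        by (auto simp add: step_def vR_def dY_def pY_def rq_def Let_def rot_vals rot_vals2 nbr_def oy_def circles_def)
    next
      assume "p = 2" "g (i,j) = 1"
      then show ?thesis using False A
        by (auto simp add: step_def vR_def dY_def pY_def rq_def Let_def rot_vals rot_vals2 nbr_def oy_def circles_def)
    next
      assume "p = 3" "g (i,j) = 1"
      then show ?thesis using False A
        by (auto simp add: step_def vR_def dY_def pY_def rq_def Let_def rot_vals rot_vals2 nbr_def oy_def circles_def)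
    next
      assume "p = 0" "g (i,j) = - 1"
      then show ?thesis using False A
        by (auto simp add: step_def vR_def dY_def pY_def rq_def Let_def rot_vals rot_vals2 nbr_def oy_def circles_def)
    next
      assume "p = 1" "g (i,j) = - 1"
      then show ?thesis using False A
        by (auto simp add: step_def vR_def dY_def pY_def rq_def Let_def rot_vals rot_vals2 nbr_def oy_def circles_def)
    next
      assume "p = 2" "g (i,j) = - 1"
      then show ?thesis using False A
        by (auto simp add: step_def vR_def dY_def pY_def rq_def Let_def rot_vals rot_vals2 nbr_def oy_def circles_def)
    next
      assume "p = 3" "g (i,j) = - 1"
      then show ?thesis using False A
        by (auto simp add: step_def vR_def dY_def pY_def rq_def Let_def rot_vals rot_vals2 nbr_def oy_def circles_def)
    qed
  qed
qed

lemma rangeX: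
  assumes da: "direction_assignment n m g" and a: "a \<in> arcs n m"
  shows "(dX g a = 1 \<and> 0 \<le> pX a \<and> pX a < 2 * int m) \<or> (dX g a = -1 \<and> 1 \<le> pX a \<and> pX a \<le> 2 * int m)"
proof -
  obtain i j p where A: "a = ((i,j),p)" "1 \<le> i" "i \<le> n" "1 \<le> j" "j \<le> m" "p < 4"
    using a by (rule arcsE)
  have c: "(i,j) \<in> circles n m" using A unfolding circles_def by auto
  have G: "g (i,j) = 1 \<or> g (i,j) = -1" using g_pm[OF da c] .
  from p4[OF A(6)] G show ?thesis
  proof (elim disjE)
    assume "p = 0" "g (i,j) = 1"
    then show ?thesis using  A
      by (simp add: rq_def rot_vals rot_vals2 ox_def oy_def dX_def dY_def pX_def pY_def)
  next
    assume "p = 1" "g (i,j) = 1"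
    then show ?thesis using  A
      by (simp add: rq_def rot_vals rot_vals2 ox_def oy_def dX_def dY_def pX_def pY_def)
  next
    assume "p = 2" "g (i,j) = 1"
    then show ?thesis using  A
      by (simp add: rq_def rot_vals rot_vals2 ox_def oy_def dX_def dY_def pX_def pY_def)
  next
    assume "p = 3" "g (i,j) = 1"
    then show ?thesis using  A
      by (simp add: rq_def rot_vals rot_vals2 ox_def oy_def dX_def dY_def pX_def pY_def)
  next
    assume "p = 0" "g (i,j) = - 1"
    then show ?thesis using  A
      by (simp add: rq_def rot_vals rot_vals2 ox_def oy_def dX_def dY_def pX_def pY_def)
  next
    assume "p = 1" "g (i,j) = - 1"
    then show ?thesis using  A
      by (simp add: rq_def rot_vals rot_vals2 ox_def oy_def dX_def dY_def pX_def pY_def)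
  next
    assume "p = 2" "g (i,j) = - 1"
    then show ?thesis using  A
      by (simp add: rq_def rot_vals rot_vals2 ox_def oy_def dX_def dY_def pX_def pY_def)
  next
    assume "p = 3" "g (i,j) = - 1"
    then show ?thesis using  A
      by (simp add: rq_def rot_vals rot_vals2 ox_def oy_def dX_def dY_def pX_def pY_def)
  qed
qed

lemma rangeY:
  assumes da: "direction_assignment n m g" and a: "a \<in> arcs n m"
  shows "(dY g a = 1 \<and> 0 \<le> pY a \<and> pY a < 2 * int n) \<or> (dY g a = -1 \<and> 1 \<le> pY a \<and> pY a \<le> 2 * int n)"
proof -
  obtain i j p where A: "a = ((i,j),p)" "1 \<le> i" "i \<le> n" "1 \<le> j" "j \<le> m" "p < 4"
    using a by (rule arcsE)
  have c: "(i,j) \<in> circles n m" using A unfolding circles_def by auto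
  have G: "g (i,j) = 1 \<or> g (i,j) = -1" using g_pm[OF da c] .
  from p4[OF A(6)] G show ?thesis
  proof (elim disjE)
    assume "p = 0" "g (i,j) = 1"
    then show ?thesis using  A
      by (simp add: rq_def rot_vals rot_vals2 ox_def oy_def dX_def dY_def pX_def pY_def)
  next
    assume "p = 1" "g (i,j) = 1"
    then show ?thesis using  A
      by (simp add: rq_def rot_vals rot_vals2 ox_def oy_def dX_def dY_def pX_def pY_def)
  next
    assume "p = 2" "g (i,j) = 1"
    then show ?thesis using  A
      by (simp add: rq_def rot_vals rot_vals2 ox_def oy_def dX_def dY_def pX_def pY_def)
  next
    assume "p = 3" "g (i,j) = 1"
    then show ?thesis using  A
      by (simp add: rq_def rot_vals rot_vals2 ox_def oy_def dX_def dY_def pX_def pY_def)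
  next
    assume "p = 0" "g (i,j) = - 1"
    then show ?thesis using  A
      by (simp add: rq_def rot_vals rot_vals2 ox_def oy_def dX_def dY_def pX_def pY_def)
  next
    assume "p = 1" "g (i,j) = - 1"
    then show ?thesis using  A
      by (simp add: rq_def rot_vals rot_vals2 ox_def oy_def dX_def dY_def pX_def pY_def)
  next
    assume "p = 2" "g (i,j) = - 1"
    then show ?thesis using  A
      by (simp add: rq_def rot_vals rot_vals2 ox_def oy_def dX_def dY_def pX_def pY_def)
  next
    assume "p = 3" "g (i,j) = - 1"
    then show ?thesis using  A
      by (simp add: rq_def rot_vals rot_vals2 ox_def oy_def dX_def dY_def pX_def pY_def)
  qed
qed

lemma decode:
  assumes da: "direction_assignment n m g" and a: "a \<in> arcs n m"
  shows "a = dec (pX a) (pY a) (dX g a) (dY g a)"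
proof -
  obtain i j p where A: "a = ((i,j),p)" "1 \<le> i" "i \<le> n" "1 \<le> j" "j \<le> m" "p < 4"
    using a by (rule arcsE)
  have c: "(i,j) \<in> circles n m" using A unfolding circles_def by auto
  have G: "g (i,j) = 1 \<or> g (i,j) = -1" using g_pm[OF da c] .
  from p4[OF A(6)] G show ?thesis
  proof (elim disjE)
    assume "p = 0" "g (i,j) = 1"
    then show ?thesis using  A
      by (simp add: rq_def rot_vals rot_vals2 ox_def oy_def dX_def dY_def pX_def pY_def dec_def decp_def)
  next
    assume "p = 1" "g (i,j) = 1"
    then show ?thesis using  A
      by (simp add: rq_def rot_vals rot_vals2 ox_def oy_def dX_def dY_def pX_def pY_def dec_def decp_def)
  next
    assume "p = 2" "g (i,j) = 1"
    then show ?thesis using  A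
      by (simp add: rq_def rot_vals rot_vals2 ox_def oy_def dX_def dY_def pX_def pY_def dec_def decp_def)
  next
    assume "p = 3" "g (i,j) = 1"
    then show ?thesis using  A
      by (simp add: rq_def rot_vals rot_vals2 ox_def oy_def dX_def dY_def pX_def pY_def dec_def decp_def)
  next
    assume "p = 0" "g (i,j) = - 1"
    then show ?thesis using  A
      by (simp add: rq_def rot_vals rot_vals2 ox_def oy_def dX_def dY_def pX_def pY_def dec_def decp_def)
  next
    assume "p = 1" "g (i,j) = - 1"
    then show ?thesis using  A
      by (simp add: rq_def rot_vals rot_vals2 ox_def oy_def dX_def dY_def pX_def pY_def dec_def decp_def)
  next
    assume "p = 2" "g (i,j) = - 1"
    then show ?thesis using  A
      by (simp add: rq_def rot_vals rot_vals2 ox_def oy_def dX_def dY_def pX_def pY_def dec_def decp_def)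
  next
    assume "p = 3" "g (i,j) = - 1"
    then show ?thesis using  A
      by (simp add: rq_def rot_vals rot_vals2 ox_def oy_def dX_def dY_def pX_def pY_def dec_def decp_def)
  qed
qed

lemma wallT:
  assumes da: "direction_assignment n m g" and a: "a \<in> arcs n m"
  shows "vR n g a = 0 \<longleftrightarrow> fst (fst a) = 1 \<and> snd a = 1"
proof -
  obtain i j p where A: "a = ((i,j),p)" "1 \<le> i" "i \<le> n" "1 \<le> j" "j \<le> m" "p < 4"
    using a by (rule arcsE)
  have c: "(i,j) \<in> circles n m" using A unfolding circles_def by auto
  have G: "g (i,j) = 1 \<or> g (i,j) = -1" using g_pm[OF da c] .
  from p4[OF A(6)] G show ?thesis
  proof (elim disjE)
    assume "p = 0" "g (i,j) = 1"
    then show ?thesis using  A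
      by (simp add: rq_def rot_vals rot_vals2 ox_def oy_def dX_def dY_def pX_def pY_def vR_def, arith?)
  next
    assume "p = 1" "g (i,j) = 1"
    then show ?thesis using  A
      by (simp add: rq_def rot_vals rot_vals2 ox_def oy_def dX_def dY_def pX_def pY_def vR_def, arith?)
  next
    assume "p = 2" "g (i,j) = 1"
    then show ?thesis using  A
      by (simp add: rq_def rot_vals rot_vals2 ox_def oy_def dX_def dY_def pX_def pY_def vR_def, arith?)
  next
    assume "p = 3" "g (i,j) = 1"
    then show ?thesis using  A
      by (simp add: rq_def rot_vals rot_vals2 ox_def oy_def dX_def dY_def pX_def pY_def vR_def, arith?)
  next
    assume "p = 0" "g (i,j) = - 1"
    then show ?thesis using  A
      by (simp add: rq_def rot_vals rot_vals2 ox_def oy_def dX_def dY_def pX_def pY_def vR_def, arith?)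
  next
    assume "p = 1" "g (i,j) = - 1"
    then show ?thesis using  A
      by (simp add: rq_def rot_vals rot_vals2 ox_def oy_def dX_def dY_def pX_def pY_def vR_def, arith?)
  next
    assume "p = 2" "g (i,j) = - 1"
    then show ?thesis using  A
      by (simp add: rq_def rot_vals rot_vals2 ox_def oy_def dX_def dY_def pX_def pY_def vR_def, arith?)
  next
    assume "p = 3" "g (i,j) = - 1"
    then show ?thesis using  A
      by (simp add: rq_def rot_vals rot_vals2 ox_def oy_def dX_def dY_def pX_def pY_def vR_def, arith?)
  qed
qed

lemma wallB:
  assumes da: "direction_assignment n m g" and a: "a \<in> arcs n m"
  shows "vR n g a = 2 * int n \<longleftrightarrow> fst (fst a) = n \<and> snd a = 3"
proof -
  obtain i j p where A: "a = ((i,j),p)" "1 \<le> i" "i \<le> n" "1 \<le> j" "j \<le> m" "p < 4"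
    using a by (rule arcsE)
  have c: "(i,j) \<in> circles n m" using A unfolding circles_def by auto
  have G: "g (i,j) = 1 \<or> g (i,j) = -1" using g_pm[OF da c] .
  from p4[OF A(6)] G show ?thesis
  proof (elim disjE)
    assume "p = 0" "g (i,j) = 1"
    then show ?thesis using  A
      by (simp add: rq_def rot_vals rot_vals2 ox_def oy_def dX_def dY_def pX_def pY_def vR_def, arith?)
  next
    assume "p = 1" "g (i,j) = 1"
    then show ?thesis using  A
      by (simp add: rq_def rot_vals rot_vals2 ox_def oy_def dX_def dY_def pX_def pY_def vR_def, arith?)
  next
    assume "p = 2" "g (i,j) = 1"
    then show ?thesis using  A
      by (simp add: rq_def rot_vals rot_vals2 ox_def oy_def dX_def dY_def pX_def pY_def vR_def, arith?)
  next
    assume "p = 3" "g (i,j) = 1"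
    then show ?thesis using  A
      by (simp add: rq_def rot_vals rot_vals2 ox_def oy_def dX_def dY_def pX_def pY_def vR_def, arith?)
  next
    assume "p = 0" "g (i,j) = - 1"
    then show ?thesis using  A
      by (simp add: rq_def rot_vals rot_vals2 ox_def oy_def dX_def dY_def pX_def pY_def vR_def, arith?)
  next
    assume "p = 1" "g (i,j) = - 1"
    then show ?thesis using  A
      by (simp add: rq_def rot_vals rot_vals2 ox_def oy_def dX_def dY_def pX_def pY_def vR_def, arith?)
  next
    assume "p = 2" "g (i,j) = - 1"
    then show ?thesis using  A
      by (simp add: rq_def rot_vals rot_vals2 ox_def oy_def dX_def dY_def pX_def pY_def vR_def, arith?)
  next
    assume "p = 3" "g (i,j) = - 1"
    then show ?thesis using  A
      by (simp add: rq_def rot_vals rot_vals2 ox_def oy_def dX_def dY_def pX_def pY_def vR_def, arith?)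
  qed
qed

lemma wallL:
  assumes da: "direction_assignment n m g" and a: "a \<in> arcs n m"
  shows "uR m g a = 0 \<longleftrightarrow> snd (fst a) = 1 \<and> snd a = 2"
proof -
  obtain i j p where A: "a = ((i,j),p)" "1 \<le> i" "i \<le> n" "1 \<le> j" "j \<le> m" "p < 4"
    using a by (rule arcsE)
  have c: "(i,j) \<in> circles n m" using A unfolding circles_def by auto
  have G: "g (i,j) = 1 \<or> g (i,j) = -1" using g_pm[OF da c] .
  from p4[OF A(6)] G show ?thesis
  proof (elim disjE)
    assume "p = 0" "g (i,j) = 1"
    then show ?thesis using  A
      by (simp add: rq_def rot_vals rot_vals2 ox_def oy_def dX_def dY_def pX_def pY_def uR_def, arith?)
  next
    assume "p = 1" "g (i,j) = 1"
    then show ?thesis using  A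
      by (simp add: rq_def rot_vals rot_vals2 ox_def oy_def dX_def dY_def pX_def pY_def uR_def, arith?)
  next
    assume "p = 2" "g (i,j) = 1"
    then show ?thesis using  A
      by (simp add: rq_def rot_vals rot_vals2 ox_def oy_def dX_def dY_def pX_def pY_def uR_def, arith?)
  next
    assume "p = 3" "g (i,j) = 1"
    then show ?thesis using  A
      by (simp add: rq_def rot_vals rot_vals2 ox_def oy_def dX_def dY_def pX_def pY_def uR_def, arith?)
  next
    assume "p = 0" "g (i,j) = - 1"
    then show ?thesis using  A
      by (simp add: rq_def rot_vals rot_vals2 ox_def oy_def dX_def dY_def pX_def pY_def uR_def, arith?)
  next
    assume "p = 1" "g (i,j) = - 1"
    then show ?thesis using  A
      by (simp add: rq_def rot_vals rot_vals2 ox_def oy_def dX_def dY_def pX_def pY_def uR_def, arith?)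
  next
    assume "p = 2" "g (i,j) = - 1"
    then show ?thesis using  A
      by (simp add: rq_def rot_vals rot_vals2 ox_def oy_def dX_def dY_def pX_def pY_def uR_def, arith?)
  next
    assume "p = 3" "g (i,j) = - 1"
    then show ?thesis using  A
      by (simp add: rq_def rot_vals rot_vals2 ox_def oy_def dX_def dY_def pX_def pY_def uR_def, arith?)
  qed
qed

lemma wallR:
  assumes da: "direction_assignment n m g" and a: "a \<in> arcs n m"
  shows "uR m g a = 2 * int m \<longleftrightarrow> snd (fst a) = m \<and> snd a = 0"
proof -
  obtain i j p where A: "a = ((i,j),p)" "1 \<le> i" "i \<le> n" "1 \<le> j" "j \<le> m" "p < 4"
    using a by (rule arcsE)
  have c: "(i,j) \<in> circles n m" using A unfolding circles_def by auto
  have G: "g (i,j) = 1 \<or> g (i,j) = -1" using g_pm[OF da c] .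
  from p4[OF A(6)] G show ?thesis
  proof (elim disjE)
    assume "p = 0" "g (i,j) = 1"
    then show ?thesis using  A
      by (simp add: rq_def rot_vals rot_vals2 ox_def oy_def dX_def dY_def pX_def pY_def uR_def, arith?)
  next
    assume "p = 1" "g (i,j) = 1"
    then show ?thesis using  A
      by (simp add: rq_def rot_vals rot_vals2 ox_def oy_def dX_def dY_def pX_def pY_def uR_def, arith?)
  next
    assume "p = 2" "g (i,j) = 1"
    then show ?thesis using  A
      by (simp add: rq_def rot_vals rot_vals2 ox_def oy_def dX_def dY_def pX_def pY_def uR_def, arith?)
  next
    assume "p = 3" "g (i,j) = 1"
    then show ?thesis using  A
      by (simp add: rq_def rot_vals rot_vals2 ox_def oy_def dX_def dY_def pX_def pY_def uR_def, arith?)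
  next
    assume "p = 0" "g (i,j) = - 1"
    then show ?thesis using  A
      by (simp add: rq_def rot_vals rot_vals2 ox_def oy_def dX_def dY_def pX_def pY_def uR_def, arith?)
  next
    assume "p = 1" "g (i,j) = - 1"
    then show ?thesis using  A
      by (simp add: rq_def rot_vals rot_vals2 ox_def oy_def dX_def dY_def pX_def pY_def uR_def, arith?)
  next
    assume "p = 2" "g (i,j) = - 1"
    then show ?thesis using  A
      by (simp add: rq_def rot_vals rot_vals2 ox_def oy_def dX_def dY_def pX_def pY_def uR_def, arith?)
  next
    assume "p = 3" "g (i,j) = - 1"
    then show ?thesis using  A
      by (simp add: rq_def rot_vals rot_vals2 ox_def oy_def dX_def dY_def pX_def pY_def uR_def, arith?)
  qed
qed

lemma step_arcs:
  assumes a: "a \<in> arcs n m" shows "step n m g a \<in> arcs n m"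
proof -
  obtain i j p where A: "a = ((i,j),p)" "1 \<le> i" "i \<le> n" "1 \<le> j" "j \<le> m" "p < 4"
    using a by (rule arcsE)
  have q4: "rot (g (i,j)) p < 4" unfolding rot_def by (simp add: nat_less_iff)
  show ?thesis using A q4 unfolding step_def Let_def arcs_def circles_def
    by (auto simp: Let_def)
qed

lemma uR_range:
  assumes da: "direction_assignment n m g" and a: "a \<in> arcs n m"
  shows "0 \<le> uR m g a \<and> uR m g a < 4 * int m"
  using rangeX[OF da a] unfolding uR_def by auto

lemma vR_range:
  assumes da: "direction_assignment n m g" and a: "a \<in> arcs n m"
  shows "0 \<le> vR n g a \<and> vR n g a < 4 * int n"
  using rangeY[OF da a] unfolding vR_def by auto

lemma uR_step:
  assumes da: "direction_assignment n m g" and a: "a \<in> arcs n m"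
  shows "uR m g (step n m g a) = (uR m g a + 1) mod (4 * int m)"
proof -
  have r1: "0 \<le> uR m g a \<and> uR m g a < 4 * int m" by (rule uR_range[OF da a])
  have r2: "0 \<le> uR m g (step n m g a) \<and> uR m g (step n m g a) < 4 * int m"
    by (rule uR_range[OF da step_arcs[OF a]])
  from step_uR[OF da a] show ?thesis
  proof
    assume h: "uR m g (step n m g a) = uR m g a + 1"
    then show ?thesis using r1 r2 by (simp add: mod_pos_pos_trivial)
  next
    assume h: "uR m g (step n m g a) = uR m g a + 1 - 4 * int m"
    then have "uR m g a + 1 = 4 * int m" using r1 r2 by linarith
    then show ?thesis using h by simp
  qed
qed

lemma vR_step:
  assumes da: "direction_assignment n m g" and a: "a \<in> arcs n m"
  shows "vR n g (step n m g a) = (vR n g a + 1) mod (4 * int n)"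
proof -
  have r1: "0 \<le> vR n g a \<and> vR n g a < 4 * int n" by (rule vR_range[OF da a])
  have r2: "0 \<le> vR n g (step n m g a) \<and> vR n g (step n m g a) < 4 * int n"
    by (rule vR_range[OF da step_arcs[OF a]])
  from step_vR[OF da a] show ?thesis
  proof
    assume h: "vR n g (step n m g a) = vR n g a + 1"
    then show ?thesis using r1 r2 by (simp add: mod_pos_pos_trivial)
  next
    assume h: "vR n g (step n m g a) = vR n g a + 1 - 4 * int n"
    then have "vR n g a + 1 = 4 * int n" using r1 r2 by linarith
    then show ?thesis using h by simp
  qed
qed

lemma iter:
  assumes da: "direction_assignment n m g" and a: "a \<in> arcs n m"
  shows "(step n m g ^^ k) a \<in> arcs n m \<and>
    uR m g ((step n m g ^^ k) a) = (uR m g a + int k) mod (4 * int m) \<and>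
    vR n g ((step n m g ^^ k) a) = (vR n g a + int k) mod (4 * int n)"
proof (induction k)
  case 0
  then show ?case using a uR_range[OF da a] vR_range[OF da a] by (simp add: mod_pos_pos_trivial)
next
  case (Suc k)
  let ?b = "(step n m g ^^ k) a"
  have b: "?b \<in> arcs n m" using Suc by simp
  show ?case using Suc step_arcs[OF b] uR_step[OF da b] vR_step[OF da b]
    by (simp add: mod_simps ac_simps)
qed

lemma inj_phi:
  assumes da: "direction_assignment n m g" and a: "a \<in> arcs n m" and b: "b \<in> arcs n m"
    and u: "uR m g a = uR m g b" and v: "vR n g a = vR n g b"
  shows "a = b"
proof -
  have x: "dX g a = dX g b \<and> pX a = pX b"
    using rangeX[OF da a] rangeX[OF da b] u unfolding uR_def by (auto split: if_splits)
  have y: "dY g a = dY g b \<and> pY a = pY b"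
    using rangeY[OF da a] rangeY[OF da b] v unfolding vR_def by (auto split: if_splits)
  show ?thesis using decode[OF da a] decode[OF da b] x y by metis
qed

lemma count_mod:
  fixes K w :: int
  assumes K: "K > 0"
  shows "card {v \<in> {0..<K * int L}. v mod K = w mod K} = L"
proof -
  have eq: "{v \<in> {0..<K * int L}. v mod K = w mod K} = (\<lambda>t. w mod K + K * int t) ` {..<L}"
  proof (intro set_eqI iffI)
    fix v assume v: "v \<in> {v \<in> {0..<K * int L}. v mod K = w mod K}"
    then have v0: "0 \<le> v" "v < K * int L" "v mod K = w mod K" by auto
    have d0: "0 \<le> v div K" using v0 K by (simp add: pos_imp_zdiv_nonneg_iff)
    have d1: "v div K < int L"
    proof (rule ccontr)
      assume "\<not> v div K < int L"
      then have "K * int L \<le> K * (v div K)" using K by (intro mult_left_mono) auto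
      moreover have "v = K * (v div K) + v mod K" by simp
      moreover have "0 \<le> v mod K" using K by simp
      ultimately show False using v0 by linarith
    qed
    have "v = w mod K + K * int (nat (v div K))" using d0 v0(3)
      by (metis int_nat_eq minus_mod_eq_mult_div ac_simps add_diff_cancel_left' diff_add_cancel le_refl max.absorb_iff1 mult.commute nat_0_le)
    moreover have "nat (v div K) < L" using d0 d1 by linarith
    ultimately show "v \<in> (\<lambda>t. w mod K + K * int t) ` {..<L}" by blast
  next
    fix v assume "v \<in> (\<lambda>t. w mod K + K * int t) ` {..<L}"
    then obtain t where t: "t < L" "v = w mod K + K * int t" by auto
    have "w mod K < K" "0 \<le> w mod K" using K by auto
    moreover have "K * int t + K \<le> K * int L"
    proof -
      have "K * (int t + 1) \<le> K * int L" using t K by (intro mult_left_mono) auto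
      then show ?thesis by (simp add: algebra_simps)
    qed
    ultimately have lt: "w mod K + K * int t < K * int L" by linarith
    have ge: "0 \<le> w mod K + K * int t" using K by simp
    show "v \<in> {v \<in> {0..<K * int L}. v mod K = w mod K}" using t K lt ge
      by (auto simp: mod_simps)
  qed
  have inj: "inj_on (\<lambda>t. w mod K + K * int t) {..<L}"
    using K by (auto simp: inj_on_def)
  show ?thesis unfolding eq using card_image[OF inj] by simp
qed

definition Dm :: "nat \<Rightarrow> nat \<Rightarrow> int" where "Dm n m = 4 * int (gcd n m)"
definition cls :: "nat \<Rightarrow> nat \<Rightarrow> int \<times> int \<Rightarrow> int" where
  "cls n m x = (fst x - snd x) mod Dm n m"
definition Tor :: "nat \<Rightarrow> nat \<Rightarrow> (int \<times> int) set" where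
  "Tor n m = {0..<4 * int m} \<times> {0..<4 * int n}"
definition phi :: "nat \<Rightarrow> nat \<Rightarrow> (circle \<Rightarrow> int) \<Rightarrow> circle \<times> nat \<Rightarrow> int \<times> int" where
  "phi n m g a = (uR m g a, vR n g a)"

lemma Dm_m: "4 * int m = Dm n m * int (m div gcd n m)"
  unfolding Dm_def by (metis dvd_mult_div_cancel gcd_dvd2 mult.assoc of_nat_mult)
lemma Dm_n: "4 * int n = Dm n m * int (n div gcd n m)"
  unfolding Dm_def by (metis dvd_mult_div_cancel gcd_dvd1 mult.assoc of_nat_mult)
lemma Dm_dvd_m: "Dm n m dvd 4 * int m" using Dm_m by (metis dvd_triv_left)
lemma Dm_dvd_n: "Dm n m dvd 4 * int n" using Dm_n by (metis dvd_triv_left)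
lemma Dm_pos: "n \<ge> 1 \<Longrightarrow> Dm n m > 0" unfolding Dm_def by simp

lemma cls_shift:
  "cls n m ((U + k) mod (4 * int m), (V + k) mod (4 * int n)) = cls n m (U, V)"
proof -
  have "((U + k) mod (4 * int m) - (V + k) mod (4 * int n)) mod Dm n m
      = (((U + k) mod (4 * int m)) mod Dm n m - ((V + k) mod (4 * int n)) mod Dm n m) mod Dm n m"
    by (simp add: mod_diff_eq)
  also have "\<dots> = ((U + k) mod Dm n m - (V + k) mod Dm n m) mod Dm n m"
    by (simp add: mod_mod_cancel[OF Dm_dvd_m] mod_mod_cancel[OF Dm_dvd_n])
  also have "\<dots> = (U - V) mod Dm n m" by (simp add: mod_diff_eq)
  finally show ?thesis unfolding cls_def by simp
qed

lemma ring_sub: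
  assumes da: "direction_assignment n m g" and a: "a \<in> arcs n m"
  shows "ring_of n m g a \<subseteq> arcs n m"
  using iter[OF da a] unfolding ring_of_def by auto

lemma phi_ring:
  assumes da: "direction_assignment n m g" and a: "a \<in> arcs n m"
    and n1: "n \<ge> 1" and m1: "m \<ge> 1"
  shows "phi n m g ` ring_of n m g a = {x \<in> Tor n m. cls n m x = cls n m (phi n m g a)}"
proof (intro set_eqI iffI)
  fix x assume "x \<in> phi n m g ` ring_of n m g a"
  then obtain k where x: "x = phi n m g ((step n m g ^^ k) a)" unfolding ring_of_def by auto
  have e: "x = ((uR m g a + int k) mod (4 * int m), (vR n g a + int k) mod (4 * int n))"
    using x iter[OF da a, of k] unfolding phi_def by simp
  have "x \<in> Tor n m" unfolding e Tor_def using n1 m1 by auto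
  moreover have "cls n m x = cls n m (phi n m g a)" unfolding e phi_def cls_shift ..
  ultimately show "x \<in> {x \<in> Tor n m. cls n m x = cls n m (phi n m g a)}" by blast
next
  fix x assume "x \<in> {x \<in> Tor n m. cls n m x = cls n m (phi n m g a)}"
  then obtain x1 x2 where x: "x = (x1, x2)" "0 \<le> x1" "x1 < 4 * int m" "0 \<le> x2" "x2 < 4 * int n"
    and c: "(x1 - x2) mod Dm n m = (uR m g a - vR n g a) mod Dm n m"
    unfolding Tor_def cls_def phi_def by auto
  define U where "U = uR m g a"
  define V where "V = vR n g a"
  have "Dm n m dvd ((x1 - U) - (x2 - V))"
    using c unfolding U_def V_def by (simp add: mod_eq_dvd_iff algebra_simps)
  then obtain t where t: "(x1 - U) - (x2 - V) = Dm n m * t" by (auto simp: dvd_def)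
  obtain s r where sr: "s * int n + r * int m = int (gcd n m)"
    using bezout_int[of "int n" "int m"] by auto
  define k0 where "k0 = (x1 - U) - 4 * t * r * int m"
  have k1: "k0 mod (4 * int m) = (x1 - U) mod (4 * int m)"
  proof -
    have "k0 = (x1 - U) + (4 * int m) * (- t * r)" unfolding k0_def by (simp add: algebra_simps)
    then show ?thesis by (metis mod_mult_self2)
  qed
  have k2: "k0 mod (4 * int n) = (x2 - V) mod (4 * int n)"
  proof -
    have "k0 = (x2 - V) + Dm n m * t - 4 * t * r * int m" unfolding k0_def using t by (simp add: algebra_simps)
    also have "\<dots> = (x2 - V) + 4 * t * (int (gcd n m) - r * int m)" unfolding Dm_def by (simp add: algebra_simps)
    also have "\<dots> = (x2 - V) + (4 * int n) * (t * s)" by (subst sr[symmetric]) (simp add: algebra_simps)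
    finally show ?thesis by simp
  qed
  define k where "k = nat (k0 mod (16 * int m * int n))"
  have pos: "16 * int m * int n > 0" using n1 m1 by simp
  have kk: "int k = k0 mod (16 * int m * int n)" unfolding k_def using pos by simp
  have e16: "16 * int m * int n = (4 * int m) * (4 * int n)" by simp
  have dm: "4 * int m dvd 16 * int m * int n" unfolding e16 by (rule dvd_triv_left)
  have dn: "4 * int n dvd 16 * int m * int n" unfolding e16 by (rule dvd_triv_right)
  have km: "int k mod (4 * int m) = (x1 - U) mod (4 * int m)"
    unfolding kk mod_mod_cancel[OF dm] k1 ..
  have kn: "int k mod (4 * int n) = (x2 - V) mod (4 * int n)"
    unfolding kk mod_mod_cancel[OF dn] k2 ..
  have u: "(U + int k) mod (4 * int m) = x1"
  proof -
    have "(U + int k) mod (4 * int m) = (U + int k mod (4 * int m)) mod (4 * int m)" by (simp add: mod_simps)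
    also have "\<dots> = (U + (x1 - U)) mod (4 * int m)" unfolding km by (simp add: mod_simps)
    also have "\<dots> = x1" using x by simp
    finally show ?thesis .
  qed
  have v: "(V + int k) mod (4 * int n) = x2"
  proof -
    have "(V + int k) mod (4 * int n) = (V + int k mod (4 * int n)) mod (4 * int n)" by (simp add: mod_simps)
    also have "\<dots> = (V + (x2 - V)) mod (4 * int n)" unfolding kn by (simp add: mod_simps)
    also have "\<dots> = x2" using x by simp
    finally show ?thesis .
  qed
  have "phi n m g ((step n m g ^^ k) a) = x"
    using iter[OF da a, of k] u v x unfolding phi_def U_def V_def by simp
  then show "x \<in> phi n m g ` ring_of n m g a" unfolding ring_of_def by blast
qed

lemma inj_on_phi:
  assumes da: "direction_assignment n m g"
  shows "inj_on (phi n m g) (arcs n m)"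
  using inj_phi[OF da] unfolding inj_on_def phi_def by auto

lemma phi_Tor:
  assumes da: "direction_assignment n m g" and a: "a \<in> arcs n m"
  shows "phi n m g a \<in> Tor n m"
  using uR_range[OF da a] vR_range[OF da a] unfolding phi_def Tor_def by auto

lemma ring_char:
  assumes da: "direction_assignment n m g" and a: "a \<in> arcs n m"
    and n1: "n \<ge> 1" and m1: "m \<ge> 1"
  shows "ring_of n m g a = {b \<in> arcs n m. cls n m (phi n m g b) = cls n m (phi n m g a)}"
proof (intro set_eqI iffI)
  fix b assume b: "b \<in> ring_of n m g a"
  then have "phi n m g b \<in> phi n m g ` ring_of n m g a" by blast
  then show "b \<in> {b \<in> arcs n m. cls n m (phi n m g b) = cls n m (phi n m g a)}"
    using phi_ring[OF da a n1 m1] ring_sub[OF da a] b by auto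
next
  fix b assume b: "b \<in> {b \<in> arcs n m. cls n m (phi n m g b) = cls n m (phi n m g a)}"
  then have "phi n m g b \<in> phi n m g ` ring_of n m g a"
    using phi_ring[OF da a n1 m1] phi_Tor[OF da] by auto
  then obtain b' where b': "b' \<in> ring_of n m g a" "phi n m g b' = phi n m g b" by auto
  have "b' = b" using inj_on_phi[OF da] b' ring_sub[OF da a] b unfolding inj_on_def by blast
  then show "b \<in> ring_of n m g a" using b' by simp
qed

lemma card_sub_pred:
  assumes da: "direction_assignment n m g" and a: "a \<in> arcs n m"
    and n1: "n \<ge> 1" and m1: "m \<ge> 1"
  shows "card {b \<in> ring_of n m g a. P (phi n m g b)} =
         card {x \<in> Tor n m. cls n m x = cls n m (phi n m g a) \<and> P x}"
proof -
  have inj: "inj_on (phi n m g) {b \<in> ring_of n m g a. P (phi n m g b)}"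
    by (rule inj_on_subset[OF inj_on_phi[OF da]]) (use ring_sub[OF da a] in blast)
  have "phi n m g ` {b \<in> ring_of n m g a. P (phi n m g b)} = {x \<in> phi n m g ` ring_of n m g a. P x}"
    by blast
  also have "\<dots> = {x \<in> Tor n m. cls n m x = cls n m (phi n m g a) \<and> P x}"
    unfolding phi_ring[OF da a n1 m1] by blast
  finally show ?thesis using card_image[OF inj] by simp
qed

lemma mod_cond1:
  fixes u v c D :: int
  shows "((u - v) mod D = c mod D) \<longleftrightarrow> (v mod D = (u - c) mod D)"
proof -
  have "((u - v) mod D = c mod D) \<longleftrightarrow> D dvd (u - v - c)" by (simp add: mod_eq_dvd_iff)
  also have "\<dots> \<longleftrightarrow> D dvd (v - (u - c))"
    by (metis dvd_minus_iff minus_diff_eq diff_diff_eq2 diff_right_commute)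
  also have "\<dots> \<longleftrightarrow> (v mod D = (u - c) mod D)" by (simp add: mod_eq_dvd_iff)
  finally show ?thesis .
qed

lemma mod_cond2:
  fixes u v c D :: int
  shows "((u - v) mod D = c mod D) \<longleftrightarrow> (u mod D = (c + v) mod D)"
proof -
  have "((u - v) mod D = c mod D) \<longleftrightarrow> D dvd (u - v - c)" by (simp add: mod_eq_dvd_iff)
  also have "\<dots> \<longleftrightarrow> D dvd (u - (c + v))" by (simp add: algebra_simps)
  also have "\<dots> \<longleftrightarrow> (u mod D = (c + v) mod D)" by (simp add: mod_eq_dvd_iff)
  finally show ?thesis .
qed

lemma card_class:
  assumes n1: "n \<ge> 1" and m1: "m \<ge> 1"
  shows "card {x \<in> Tor n m. cls n m x = c mod Dm n m} = 4 * m * (n div gcd n m)"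
proof -
  let ?D = "Dm n m"
  let ?L = "n div gcd n m"
  have eq: "{x \<in> Tor n m. cls n m x = c mod ?D} =
    Sigma {0..<4 * int m} (\<lambda>u. {v \<in> {0..<?D * int ?L}. v mod ?D = (u - c) mod ?D})"
    unfolding Tor_def cls_def Dm_n[symmetric] using mod_cond1 by auto
  have inner: "\<And>u. card {v \<in> {0..<?D * int ?L}. v mod ?D = (u - c) mod ?D} = ?L"
    by (rule count_mod) (rule Dm_pos[OF n1])
  have fin: "\<And>u. finite {v \<in> {0..<?D * int ?L}. v mod ?D = (u - c) mod ?D}"
    by (rule finite_subset[of _ "{0..<?D * int ?L}"]) auto
  have "card {x \<in> Tor n m. cls n m x = c mod ?D} =
      (\<Sum>u\<in>{0..<4 * int m}. card {v \<in> {0..<?D * int ?L}. v mod ?D = (u - c) mod ?D})"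
    unfolding eq by (rule card_SigmaI) (simp, use fin in blast)
  also have "\<dots> = (\<Sum>u\<in>{0..<4 * int m}. ?L)" by (simp only: inner)
  also have "\<dots> = 4 * m * ?L" by (simp add: nat_mult_distrib)
  finally show ?thesis .
qed

lemma card_lineV:
  assumes n1: "n \<ge> 1" and m1: "m \<ge> 1" and v0: "0 \<le> v0" "v0 < 4 * int n"
  shows "card {x \<in> Tor n m. cls n m x = c mod Dm n m \<and> snd x = v0} = m div gcd n m"
proof -
  let ?D = "Dm n m"
  let ?L = "m div gcd n m"
  have eq: "{x \<in> Tor n m. cls n m x = c mod ?D \<and> snd x = v0} =
    (\<lambda>u. (u, v0)) ` {u \<in> {0..<?D * int ?L}. u mod ?D = (c + v0) mod ?D}"
    unfolding Tor_def cls_def Dm_m[symmetric] using mod_cond2 v0 by auto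
  have inj: "inj_on (\<lambda>u. (u, v0)) X" for X :: "int set" by (auto simp: inj_on_def)
  show ?thesis unfolding eq card_image[OF inj]
    by (rule count_mod) (rule Dm_pos[OF n1])
qed

lemma card_lineU:
  assumes n1: "n \<ge> 1" and m1: "m \<ge> 1" and u0: "0 \<le> u0" "u0 < 4 * int m"
  shows "card {x \<in> Tor n m. cls n m x = c mod Dm n m \<and> fst x = u0} = n div gcd n m"
proof -
  let ?D = "Dm n m"
  let ?L = "n div gcd n m"
  have eq: "{x \<in> Tor n m. cls n m x = c mod ?D \<and> fst x = u0} =
    (\<lambda>v. (u0, v)) ` {v \<in> {0..<?D * int ?L}. v mod ?D = (u0 - c) mod ?D}"
    unfolding Tor_def cls_def Dm_n[symmetric] using mod_cond1 u0 by auto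
  have inj: "inj_on (\<lambda>v. (u0, v)) X" for X :: "int set" by (auto simp: inj_on_def)
  show ?thesis unfolding eq card_image[OF inj]
    by (rule count_mod) (rule Dm_pos[OF n1])
qed

lemma on_ring_wall:
  assumes da: "direction_assignment n m g" and a: "a \<in> arcs n m"
    and nb: "nbr c q \<notin> circles n m"
  shows "on_ring g (ring_of n m g a) c q \<longleftrightarrow> (c, q) \<in> ring_of n m g a"
proof
  assume "on_ring g (ring_of n m g a) c q"
  then obtain p where p: "(c, p) \<in> ring_of n m g a" "p = q \<or> rot (g c) p = q"
    unfolding on_ring_def by auto
  show "(c, q) \<in> ring_of n m g a"
  proof (cases "p = q")
    case True then show ?thesis using p by simp
  next
    case False
    then have r: "rot (g c) p = q" using p by auto
    obtain k where k: "(c, p) = (step n m g ^^ k) a" using p unfolding ring_of_def by auto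
    have "step n m g (c, p) = (if nbr c q \<in> circles n m then (nbr c q, (q + 2) mod 4) else (c, q))"
      unfolding step_def Let_def by (simp add: r)
    then have "step n m g (c, p) = (c, q)" using nb by simp
    then have "(step n m g ^^ Suc k) a = (c, q)" using k by simp
    then have "\<exists>k'. (c, q) = (step n m g ^^ k') a \<and> True" by (intro exI[where x="Suc k"]) simp
    then show ?thesis unfolding ring_of_def by simp
  qed
next
  assume "(c, q) \<in> ring_of n m g a"
  then show "on_ring g (ring_of n m g a) c q" unfolding on_ring_def by auto
qed

lemma wall_count:
  assumes inj: "inj_on W K" and R: "R \<subseteq> arcs n m"
    and ch: "\<And>b. b \<in> arcs n m \<Longrightarrow> P (phi n m g b) \<longleftrightarrow> (\<exists>k\<in>K. b = W k)"
  shows "card {k \<in> K. W k \<in> R} = card {b \<in> R. P (phi n m g b)}"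
proof -
  have "W ` {k \<in> K. W k \<in> R} = {b \<in> R. P (phi n m g b)}"
  proof (intro set_eqI iffI)
    fix b assume "b \<in> W ` {k \<in> K. W k \<in> R}"
    then obtain k where "k \<in> K" "W k \<in> R" "b = W k" by auto
    then show "b \<in> {b \<in> R. P (phi n m g b)}" using ch R by blast
  next
    fix b assume "b \<in> {b \<in> R. P (phi n m g b)}"
    then show "b \<in> W ` {k \<in> K. W k \<in> R}" using ch R by blast
  qed
  moreover have "inj_on W {k \<in> K. W k \<in> R}" using inj by (rule inj_on_subset) auto
  then have "card (W ` {k \<in> K. W k \<in> R}) = card {k \<in> K. W k \<in> R}" by (rule card_image)
  ultimately show ?thesis by simp
qed

lemma ring_props:
  assumes da: "direction_assignment n m g" and a: "a \<in> arcs n m"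
    and n1: "n \<ge> 1" and m1: "m \<ge> 1"
  shows "card (ring_of n m g a) = 4 * m * (n div gcd n m) \<and>
    hits n m g Top (ring_of n m g a) = m div gcd n m \<and>
    hits n m g Bottom (ring_of n m g a) = m div gcd n m \<and>
    hits n m g Left (ring_of n m g a) = n div gcd n m \<and>
    hits n m g Right (ring_of n m g a) = n div gcd n m"
proof -
  let ?R = "ring_of n m g a"
  let ?c = "uR m g a - vR n g a"
  have cl: "cls n m (phi n m g a) = ?c mod Dm n m" unfolding cls_def phi_def by simp
  have Rs: "?R \<subseteq> arcs n m" by (rule ring_sub[OF da a])
  have c1: "card ?R = 4 * m * (n div gcd n m)"
  proof -
    have inj: "inj_on (phi n m g) ?R" by (rule inj_on_subset[OF inj_on_phi[OF da] Rs])
    have "card ?R = card (phi n m g ` ?R)" using card_image[OF inj] by simp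
    also have "\<dots> = card {x \<in> Tor n m. cls n m x = ?c mod Dm n m}"
      unfolding phi_ring[OF da a n1 m1] cl ..
    finally show ?thesis using card_class[OF n1 m1] by simp
  qed
  have cT: "hits n m g Top ?R = m div gcd n m"
  proof -
    have "hits n m g Top ?R = card {j \<in> {1..m}. ((1,j),1) \<in> ?R}"
    proof -
      have "\<And>j. on_ring g ?R (1,j) 1 \<longleftrightarrow> ((1,j), 1) \<in> ?R"
        by (rule on_ring_wall[OF da a]) (simp add: nbr_def circles_def)
      then show ?thesis by (simp add: hits_def)
    qed
    also have "\<dots> = card {b \<in> ?R. (\<lambda>x. snd x = 0) (phi n m g b)}"
    proof (rule wall_count[OF _ Rs])
      show "inj_on (\<lambda>j. ((1::nat, j), 1::nat)) {1..m}" by (auto simp: inj_on_def)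
      fix b assume b: "b \<in> arcs n m"
      show "(\<lambda>x. snd x = 0) (phi n m g b) \<longleftrightarrow> (\<exists>k\<in>{1..m}. b = ((1, k), 1))"
      proof -
        obtain i j p where B: "b = ((i,j),p)" "1 \<le> i" "i \<le> n" "1 \<le> j" "j \<le> m" "p < 4"
          using b by (rule arcsE)
        show ?thesis using wallT[OF da b] B by (auto simp: phi_def)
      qed
    qed
    also have "\<dots> = card {x \<in> Tor n m. cls n m x = ?c mod Dm n m \<and> snd x = 0}"
      using card_sub_pred[OF da a n1 m1, of "\<lambda>x. snd x = 0"] cl by simp
    also have "\<dots> = m div gcd n m" by (rule card_lineV[OF n1 m1]) (use n1 in auto)
    finally show ?thesis .
  qed
  have cB: "hits n m g Bottom ?R = m div gcd n m"
  proof -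
    have "hits n m g Bottom ?R = card {j \<in> {1..m}. ((n,j),3) \<in> ?R}"
    proof -
      have "\<And>j. on_ring g ?R (n,j) 3 \<longleftrightarrow> ((n,j), 3) \<in> ?R"
        by (rule on_ring_wall[OF da a]) (simp add: nbr_def circles_def)
      then show ?thesis by (simp add: hits_def)
    qed
    also have "\<dots> = card {b \<in> ?R. (\<lambda>x. snd x = 2 * int n) (phi n m g b)}"
    proof (rule wall_count[OF _ Rs])
      show "inj_on (\<lambda>j. ((n, j), 3::nat)) {1..m}" by (auto simp: inj_on_def)
      fix b assume b: "b \<in> arcs n m"
      show "(\<lambda>x. snd x = 2 * int n) (phi n m g b) \<longleftrightarrow> (\<exists>k\<in>{1..m}. b = ((n, k), 3))"
      proof -
        obtain i j p where B: "b = ((i,j),p)" "1 \<le> i" "i \<le> n" "1 \<le> j" "j \<le> m" "p < 4"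
          using b by (rule arcsE)
        show ?thesis using wallB[OF da b] B by (auto simp: phi_def)
      qed
    qed
    also have "\<dots> = card {x \<in> Tor n m. cls n m x = ?c mod Dm n m \<and> snd x = 2 * int n}"
      using card_sub_pred[OF da a n1 m1, of "\<lambda>x. snd x = 2 * int n"] cl by simp
    also have "\<dots> = m div gcd n m" by (rule card_lineV[OF n1 m1]) (use n1 in auto)
    finally show ?thesis .
  qed
  have cL: "hits n m g Left ?R = n div gcd n m"
  proof -
    have "hits n m g Left ?R = card {i \<in> {1..n}. ((i,1),2) \<in> ?R}"
    proof -
      have "\<And>i. on_ring g ?R (i,1) 2 \<longleftrightarrow> ((i,1), 2) \<in> ?R"
        by (rule on_ring_wall[OF da a]) (simp add: nbr_def circles_def)
      then show ?thesis by (simp add: hits_def)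
    qed
    also have "\<dots> = card {b \<in> ?R. (\<lambda>x. fst x = 0) (phi n m g b)}"
    proof (rule wall_count[OF _ Rs])
      show "inj_on (\<lambda>i. ((i, 1::nat), 2::nat)) {1..n}" by (auto simp: inj_on_def)
      fix b assume b: "b \<in> arcs n m"
      show "(\<lambda>x. fst x = 0) (phi n m g b) \<longleftrightarrow> (\<exists>k\<in>{1..n}. b = ((k, 1), 2))"
      proof -
        obtain i j p where B: "b = ((i,j),p)" "1 \<le> i" "i \<le> n" "1 \<le> j" "j \<le> m" "p < 4"
          using b by (rule arcsE)
        show ?thesis using wallL[OF da b] B by (auto simp: phi_def)
      qed
    qed
    also have "\<dots> = card {x \<in> Tor n m. cls n m x = ?c mod Dm n m \<and> fst x = 0}"
      using card_sub_pred[OF da a n1 m1, of "\<lambda>x. fst x = 0"] cl by simp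
    also have "\<dots> = n div gcd n m" by (rule card_lineU[OF n1 m1]) (use m1 in auto)
    finally show ?thesis .
  qed
  have cRt: "hits n m g Right ?R = n div gcd n m"
  proof -
    have "hits n m g Right ?R = card {i \<in> {1..n}. ((i,m),0) \<in> ?R}"
    proof -
      have "\<And>i. on_ring g ?R (i,m) 0 \<longleftrightarrow> ((i,m), 0) \<in> ?R"
        by (rule on_ring_wall[OF da a]) (simp add: nbr_def circles_def)
      then show ?thesis by (simp add: hits_def)
    qed
    also have "\<dots> = card {b \<in> ?R. (\<lambda>x. fst x = 2 * int m) (phi n m g b)}"
    proof (rule wall_count[OF _ Rs])
      show "inj_on (\<lambda>i. ((i, m), 0::nat)) {1..n}" by (auto simp: inj_on_def)
      fix b assume b: "b \<in> arcs n m"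
      show "(\<lambda>x. fst x = 2 * int m) (phi n m g b) \<longleftrightarrow> (\<exists>k\<in>{1..n}. b = ((k, m), 0))"
      proof -
        obtain i j p where B: "b = ((i,j),p)" "1 \<le> i" "i \<le> n" "1 \<le> j" "j \<le> m" "p < 4"
          using b by (rule arcsE)
        show ?thesis using wallR[OF da b] B by (auto simp: phi_def)
      qed
    qed
    also have "\<dots> = card {x \<in> Tor n m. cls n m x = ?c mod Dm n m \<and> fst x = 2 * int m}"
      using card_sub_pred[OF da a n1 m1, of "\<lambda>x. fst x = 2 * int m"] cl by simp
    also have "\<dots> = n div gcd n m" by (rule card_lineU[OF n1 m1]) (use m1 in auto)
    finally show ?thesis .
  qed
  show ?thesis using c1 cT cB cL cRt by blast
qed

lemma card_arcs: "card (arcs n m) = n * m * 4"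
  unfolding arcs_def circles_def by (simp add: card_cartesian_product)

lemma finite_arcs: "finite (arcs n m)"
  unfolding arcs_def circles_def by simp

theorem theorem5:
  fixes n m :: nat and g :: "circle \<Rightarrow> int"
  assumes "n \<ge> 1" and "m \<ge> 1" and "direction_assignment n m g"
  shows "card (rings n m g) = gcd n m \<and>
    (\<forall>R\<in>rings n m g. \<forall>R'\<in>rings n m g.
       ring_length R = ring_length R' \<and> (\<forall>w. hits n m g w R = hits n m g w R'))"
proof -
  note n1 = assms(1) and m1 = assms(2) and da = assms(3)
  let ?d = "gcd n m"
  let ?k = "4 * m * (n div ?d)"
  have props: "\<And>R. R \<in> rings n m g \<Longrightarrow> card R = ?k \<and>
    hits n m g Top R = m div ?d \<and> hits n m g Bottom R = m div ?d \<and>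
    hits n m g Left R = n div ?d \<and> hits n m g Right R = n div ?d"
    unfolding rings_def using ring_props[OF da _ n1 m1] by blast
  have U: "\<Union>(rings n m g) = arcs n m"
  proof
    show "\<Union>(rings n m g) \<subseteq> arcs n m" unfolding rings_def using ring_sub[OF da] by blast
  next
    show "arcs n m \<subseteq> \<Union>(rings n m g)"
    proof
      fix a assume a: "a \<in> arcs n m"
      have "a \<in> ring_of n m g a" unfolding ring_of_def
        by (rule CollectI, rule exI[where x=0]) simp
      then show "a \<in> \<Union>(rings n m g)" using a unfolding rings_def by blast
    qed
  qed
  have disj: "\<forall>c1\<in>rings n m g. \<forall>c2\<in>rings n m g. c1 \<noteq> c2 \<longrightarrow> c1 \<inter> c2 = {}"
  proof (intro ballI impI)
    fix c1 c2 assume c1: "c1 \<in> rings n m g" and c2: "c2 \<in> rings n m g" and ne: "c1 \<noteq> c2"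
    obtain a1 where a1: "a1 \<in> arcs n m" "c1 = ring_of n m g a1" using c1 unfolding rings_def by auto
    obtain a2 where a2: "a2 \<in> arcs n m" "c2 = ring_of n m g a2" using c2 unfolding rings_def by auto
    show "c1 \<inter> c2 = {}"
    proof (rule ccontr)
      assume "c1 \<inter> c2 \<noteq> {}"
      then obtain x where "x \<in> c1" "x \<in> c2" by auto
      then have "cls n m (phi n m g a1) = cls n m (phi n m g a2)"
        using ring_char[OF da a1(1) n1 m1] ring_char[OF da a2(1) n1 m1] a1 a2 by auto
      then have "c1 = c2"
        using ring_char[OF da a1(1) n1 m1] ring_char[OF da a2(1) n1 m1] a1 a2 by simp
      then show False using ne by simp
    qed
  qed
  have fin: "finite (rings n m g)" unfolding rings_def using finite_arcs by simp
  have "?k * card (rings n m g) = card (\<Union>(rings n m g))"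
    by (rule card_partition[OF fin]) (use U finite_arcs props disj in auto)
  then have eq: "?k * card (rings n m g) = n * m * 4" using U card_arcs by simp
  have nd: "n = ?d * (n div ?d)" by simp
  have pos: "m * (n div ?d) > 0"
  proof -
    have "?d > 0" using n1 by simp
    then have "n div ?d > 0" using n1 nd by (metis gr0I mult_0_right not_one_le_zero)
    then show ?thesis using m1 by simp
  qed
  have "(4 * (m * (n div ?d))) * card (rings n m g) = (4 * (m * (n div ?d))) * ?d"
    using eq nd by (metis mult.assoc mult.commute)
  then have c: "card (rings n m g) = ?d" using pos by simp
  have rest: "\<forall>R\<in>rings n m g. \<forall>R'\<in>rings n m g.
       ring_length R = ring_length R' \<and> (\<forall>w. hits n m g w R = hits n m g w R')"
  proof (intro ballI conjI allI)
    fix R R' w assume R: "R \<in> rings n m g" and R': "R' \<in> rings n m g"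
    show "ring_length R = ring_length R'" unfolding ring_length_def using props[OF R] props[OF R'] by simp
    show "hits n m g w R = hits n m g w R'" using props[OF R] props[OF R'] by (cases w) auto
  qed
  show ?thesis using c rest by blast
qed

end
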